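(* Let $q$ be a prime power and $k\ge 1$ an integer. A simple graph $G$ satisfies $\operatorname{mr}(\mathbb{F}_q,G)\le k$ (i.e. $G\in\mathcal{G}_k(\mathbb{F}_q)$) if and only if $G$ is a blowup of some graph of the form $H\cup K_1$ with $H\in\mathfrak{g}_k(\mathbb{F}_q)$, where $K_1$ denotes a single isolated nonlooped vertex and $\cup$ is disjoint union.
   Context: Graphs may have loops but no multiple edges; a simple graph has no loops. For a field $F$ and a simple graph $G$ on vertices $\{1,\dots,n\}$, $S(F,G)$ is the set of symmetric $n\times n$ matrices $A$ over $F$ with $a_{ij}\neq 0$ for $i\ne j$ iff $ij$ is an edge of $G$ (diagonal entries unrestricted); $\operatorname{mr}(F,G)=\min\{\operatorname{rank}A: A\in S(F,G)\}$ and $\mathcal{G}_k(F)=\{G:\operatorname{mr}(F,G)\le k\}$. For a symmetric $n\times n$ matrix $A$, the looped graph corresponding to $A$, $\Gamma(A)$, has vertex set $\{1,\dots,n\}$, an edge $ij$ ($i\neq j$) iff $a_{ij}\neq0$, and a loop at $i$ iff $a_{ii}\ne 0$. Definition of $\mathfrak{g}_k(\mathbb{F}_q)$: let $x_1,\dots,x_m$ be representatives of the classes of nonzero vectors of $\mathbb{F}_q^k$ under the relation $x\sim cx$ ($c\in\mathbb{F}_q$, $c\neq0$), and let $U=[x_1\ \cdots\ x_m]$ be the $k\times m$ matrix with these columns; $\mathfrak{g}_k(\mathbb{F}_q)$ is the set of isomorphism classes of looped graphs $\Gamma(U^tBU)$ as $B$ ranges over the invertible symmetric $k\times k$ matrices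 over $\mathbb{F}_q$ (equivalently over a set of representatives of congruence classes $B\mapsto C^tBC$, $C$ invertible). A blowup of a looped graph $G$ with vertices $v_1,\dots,v_n$ is a simple graph obtained by replacing each nonlooped vertex $v_i$ by a (possibly empty) independent set $V_i$, each looped vertex $v_i$ by a (possibly empty) clique $V_i$, and each edge $v_iv_j$ ($i\ne j$) by all edges $xy$ with $x\in V_i$, $y\in V_j$. *)

theory Defs
  imports "Jordan_Normal_Form.DL_Rank"
begin

text \<open>Simple graphs on the vertex set {0..<n} (0-based instead of 1-based),
  given by a symmetric irreflexive adjacency relation E.\<close>
definition simple_graph :: "nat \<Rightarrow> (nat \<Rightarrow> nat \<Rightarrow> bool) \<Rightarrow> bool" where
  "simple_graph n E \<longleftrightarrow> (\<forall>i j. E i j \<longrightarrow> i < n \<and> j < n) \<and> (\<forall>i j. E i j \<longrightarrow> E j i) \<and> (\<forall>i. \<not> E i i)"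

definition mat_rank :: "'a::field mat \<Rightarrow> nat" where
  "mat_rank A = vec_space.rank (dim_row A) A"

definition S_set :: "'a::field itself \<Rightarrow> nat \<Rightarrow> (nat \<Rightarrow> nat \<Rightarrow> bool) \<Rightarrow> 'a mat set" where
  "S_set _ n E = {A. A \<in> carrier_mat n n \<and> transpose_mat A = A \<and>
      (\<forall>i<n. \<forall>j<n. i \<noteq> j \<longrightarrow> (A $$ (i, j) \<noteq> 0 \<longleftrightarrow> E i j))}"

definition mr :: "'a::field itself \<Rightarrow> nat \<Rightarrow> (nat \<Rightarrow> nat \<Rightarrow> bool) \<Rightarrow> nat" where
  "mr T n E = (LEAST r. \<exists>A \<in> S_set T n E. mat_rank A = r)"

text \<open>Looped graphs: a pair (m, L) with vertex set {0..<m}, symmetric adjacency L;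
  a loop at i means L i i.\<close>
type_synonym looped_graph = "nat \<times> (nat \<Rightarrow> nat \<Rightarrow> bool)"

definition Gamma :: "'a::field mat \<Rightarrow> looped_graph" where
  "Gamma A = (dim_row A, (\<lambda>i j. i < dim_row A \<and> j < dim_row A \<and> A $$ (i, j) \<noteq> 0))"

definition looped_iso :: "looped_graph \<Rightarrow> looped_graph \<Rightarrow> bool" where
  "looped_iso G H \<longleftrightarrow> (\<exists>f. bij_betw f {..<fst G} {..<fst H} \<and>
      (\<forall>i<fst G. \<forall>j<fst G. snd G i j \<longleftrightarrow> snd H (f i) (f j)))"

definition proj_reps :: "'a::field itself \<Rightarrow> nat \<Rightarrow> 'a vec list \<Rightarrow> bool" where
  "proj_reps _ k xs \<longleftrightarrow>
     (\<forall>x \<in> set xs. x \<in> carrier_vec k \<and> x \<noteq> 0\<^sub>v k) \<and>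
     (\<forall>i < length xs. \<forall>j < length xs. i \<noteq> j \<longrightarrow> (\<nexists>c. c \<noteq> 0 \<and> xs ! j = c \<cdot>\<^sub>v (xs ! i))) \<and>
     (\<forall>v \<in> carrier_vec k. v \<noteq> 0\<^sub>v k \<longrightarrow> (\<exists>x \<in> set xs. \<exists>c. c \<noteq> 0 \<and> v = c \<cdot>\<^sub>v x))"

text \<open>Membership (up to isomorphism) in the set g_k(F): H is isomorphic to
  Gamma(U^t B U) for B invertible symmetric k x k.\<close>
definition in_gk :: "'a::field itself \<Rightarrow> nat \<Rightarrow> looped_graph \<Rightarrow> bool" where
  "in_gk T k H \<longleftrightarrow> (\<exists>(xs :: 'a vec list) (B :: 'a mat). proj_reps T k xs \<and>
      B \<in> carrier_mat k k \<and> transpose_mat B = B \<and> invertible_mat B \<and>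
      looped_iso (Gamma (transpose_mat (mat_of_cols k xs) * B * mat_of_cols k xs)) H)"

definition add_K1 :: "looped_graph \<Rightarrow> looped_graph" where
  "add_K1 H = (Suc (fst H), (\<lambda>i j. i < fst H \<and> j < fst H \<and> snd H i j))"

text \<open>Simple graph (n,E) is a blowup of looped graph (m,L): vertex x of G lies in the
  part V_(f x); the parts V_i are possibly empty; V_i is a clique if i is looped and an
  independent set otherwise; parts of adjacent vertices are completely joined, others
  not joined.\<close>
definition is_blowup :: "nat \<Rightarrow> (nat \<Rightarrow> nat \<Rightarrow> bool) \<Rightarrow> looped_graph \<Rightarrow> bool" where
  "is_blowup n E H \<longleftrightarrow> (\<exists>f. (\<forall>x<n. f x < fst H) \<and>
      (\<forall>x<n. \<forall>y<n. x \<noteq> y \<longrightarrow> (E x y \<longleftrightarrow> snd H (f x) (f y))))"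

end

theory Submission
  imports Defs
begin


lemma inv_from_kernel:
  fixes D :: "'a::field mat"
  assumes D: "D \<in> carrier_mat r r" and ker: "\<And>v. v \<in> carrier_vec r \<Longrightarrow> D *\<^sub>v v = 0\<^sub>v r \<Longrightarrow> v = 0\<^sub>v r"
  shows "invertible_mat D"
proof -
  have "det D \<noteq> 0" using det_0_iff_vec_prod_zero_field[OF D] ker by blast
  from det_non_zero_imp_unit[OF D this, of "()"]
  obtain B where B: "B \<in> carrier_mat r r" "B * D = 1\<^sub>m r" "D * B = 1\<^sub>m r"
    unfolding Units_def ring_mat_simps by auto
  show ?thesis unfolding invertible_mat_def inverts_mat_def using B D by auto
qed

lemma rank_sum_le:
  fixes f g :: "nat \<Rightarrow> nat \<Rightarrow> 'a::field"
  shows "vec_space.rank n (mat n n' (\<lambda>(i,j). \<Sum>t<m. f i t * g t j)) \<le> m"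
proof (induction m)
  case 0
  have z: "mat n n' (\<lambda>(i,j). \<Sum>t<0. f i t * g t j) = (0\<^sub>m n n' :: 'a mat)" by (rule eq_matI) auto
  show ?case unfolding z vec_space.rank_0I by simp
next
  case (Suc m)
  have eq: "mat n n' (\<lambda>(i,j). \<Sum>t<Suc m. f i t * g t j) = mat n n' (\<lambda>(i,j). \<Sum>t<m. f i t * g t j) + mat n n' (\<lambda>(i,j). f i m * g m j)"
    by (rule eq_matI) auto
  have "vec_space.rank n (mat n n' (\<lambda>(i,j). f i m * g m j)) \<le> 1"
    by (rule vec_space.rank_le_1_product_entries[of _ n n' "\<lambda>i. f i m" "\<lambda>j. g m j"]) auto
  moreover have "vec_space.rank n (mat n n' (\<lambda>(i,j). \<Sum>t<Suc m. f i t * g t j)) \<le>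
     vec_space.rank n (mat n n' (\<lambda>(i,j). \<Sum>t<m. f i t * g t j)) + vec_space.rank n (mat n n' (\<lambda>(i,j). f i m * g m j))"
    unfolding eq by (rule vec_space.rank_subadditive) auto
  ultimately show ?case using Suc by linarith
qed

lemma rank_prod_le:
  fixes M W :: "'a::field mat"
  assumes "M \<in> carrier_mat n k" "W \<in> carrier_mat k n'"
  shows "vec_space.rank n (M * W) \<le> k"
proof -
  have "M * W = mat n n' (\<lambda>(i,j). \<Sum>t<k. M $$ (i,t) * W $$ (t,j))"
    using assms by (intro eq_matI) (auto simp: scalar_prod_def lessThan_atLeast0)
  then show ?thesis using rank_sum_le[where n=n and n'=n' and m=k and f="\<lambda>i t. M $$ (i,t)" and g="\<lambda>t j. W $$ (t,j)"] by simp
qed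


definition bil :: "'a::comm_ring_1 mat \<Rightarrow> nat \<Rightarrow> 'a vec \<Rightarrow> 'a vec \<Rightarrow> 'a" where
  "bil B k u v = (\<Sum>s<k. \<Sum>t<k. u $ s * B $$ (s,t) * v $ t)"

lemma quad_entry:
  fixes P B :: "'a::comm_ring_1 mat"
  assumes P: "P \<in> carrier_mat k p" and B: "B \<in> carrier_mat k k" and i: "i < p" and j: "j < p"
  shows "(transpose_mat P * B * P) $$ (i,j) = bil B k (col P i) (col P j)"
proof -
  have "(transpose_mat P * B * P) $$ (i,j) = (\<Sum>s<k. P$$(s,i) * (\<Sum>t<k. B$$(s,t) * P$$(t,j)))"
    using assms by (simp add: scalar_prod_def lessThan_atLeast0)
  also have "\<dots> = (\<Sum>s<k. \<Sum>t<k. P$$(s,i) * B$$(s,t) * P$$(t,j))"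
    by (simp add: sum_distrib_left mult.assoc)
  also have "\<dots> = bil B k (col P i) (col P j)"
    unfolding bil_def using assms by (intro sum.cong refl) auto
  finally show ?thesis .
qed

lemma bil_smult_l:
  fixes u :: "'a::comm_ring_1 vec"
  assumes "u \<in> carrier_vec k"
  shows "bil B k (c \<cdot>\<^sub>v u) v = c * bil B k u v"
proof -
  have "bil B k (c \<cdot>\<^sub>v u) v = (\<Sum>s<k. \<Sum>t<k. c * (u $ s * B $$ (s,t) * v $ t))"
    unfolding bil_def using assms by (intro sum.cong refl) (auto simp: mult.assoc)
  then show ?thesis unfolding bil_def by (simp add: sum_distrib_left)
qed

lemma bil_smult_r:
  fixes u :: "'a::comm_ring_1 vec"
  assumes "v \<in> carrier_vec k"
  shows "bil B k u (c \<cdot>\<^sub>v v) = c * bil B k u v"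
proof -
  have "bil B k u (c \<cdot>\<^sub>v v) = (\<Sum>s<k. \<Sum>t<k. c * (u $ s * B $$ (s,t) * v $ t))"
    unfolding bil_def using assms by (intro sum.cong refl) (auto simp: ac_simps)
  then show ?thesis unfolding bil_def by (simp add: sum_distrib_left)
qed

lemma bil_zero_l: "bil B k (0\<^sub>v k) v = (0::'a::comm_ring_1)"
  unfolding bil_def by (intro sum.neutral ballI) auto

lemma bil_zero_r: "bil B k u (0\<^sub>v k) = (0::'a::comm_ring_1)"
  unfolding bil_def by (intro sum.neutral ballI) auto

lemma bil_sym:
  fixes B :: "'a::comm_ring_1 mat"
  assumes B: "B \<in> carrier_mat k k" and sym: "transpose_mat B = B"
  shows "bil B k u v = bil B k v u"
proof -
  have Bs: "B $$ (s,t) = B $$ (t,s)" if "s<k" "t<k" for s t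
    using that B by (metis carrier_matD index_transpose_mat(1) sym)
  have "bil B k u v = (\<Sum>t<k. \<Sum>s<k. u $ s * B $$ (s,t) * v $ t)"
    unfolding bil_def by (rule sum.swap)
  also have "\<dots> = bil B k v u" unfolding bil_def
    by (intro sum.cong refl) (simp add: Bs ac_simps)
  finally show ?thesis .
qed

lemma quad_sym:
  fixes P B :: "'a::comm_ring_1 mat"
  assumes P: "P \<in> carrier_mat k p" and B: "B \<in> carrier_mat k k" and sym: "transpose_mat B = B"
  shows "transpose_mat (transpose_mat P * B * P) = transpose_mat P * B * P"
proof (rule eq_matI)
  fix i j assume "i < dim_row (transpose_mat P * B * P)" "j < dim_col (transpose_mat P * B * P)"
  then have ij: "i < p" "j < p" using P B by auto
  have "transpose_mat (transpose_mat P * B * P) $$ (i,j) = (transpose_mat P * B * P) $$ (j,i)"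
    using ij P B by simp
  also have "\<dots> = bil B k (col P j) (col P i)" by (rule quad_entry[OF P B ij(2) ij(1)])
  also have "\<dots> = bil B k (col P i) (col P j)" by (rule bil_sym[OF B sym])
  also have "\<dots> = (transpose_mat P * B * P) $$ (i,j)" by (rule quad_entry[OF P B ij, symmetric])
  finally show "transpose_mat (transpose_mat P * B * P) $$ (i,j) = (transpose_mat P * B * P) $$ (i,j)" .
qed (use P B in auto)

lemma sum_trunc:
  fixes r k :: nat
  assumes "r \<le> k" "\<And>s. r \<le> s \<Longrightarrow> s < k \<Longrightarrow> g s = 0"
  shows "(\<Sum>s<k. g s) = (\<Sum>s<r. g s)"
proof (rule sum.mono_neutral_right)
  show "finite {..<k}" by simp
  show "{..<r} \<subseteq> {..<k}" using assms by auto
  show "\<forall>i\<in>{..<k} - {..<r}. g i = 0" using assms by auto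
qed

lemma finite_carrier_vec: "finite (carrier_vec k :: 'a::finite vec set)"
proof -
  have "(carrier_vec k :: 'a vec set) \<subseteq> vec_of_list ` {xs. set xs \<subseteq> UNIV \<and> length xs = k}"
  proof
    fix v :: "'a vec" assume "v \<in> carrier_vec k"
    then have "v = vec_of_list (list_of_vec v)" "list_of_vec v \<in> {xs. set xs \<subseteq> UNIV \<and> length xs = k}"
      by (auto simp only: vec_list length_list_of_vec carrier_vec_def mem_Collect_eq subset_UNIV)
    then show "v \<in> vec_of_list ` {xs. set xs \<subseteq> UNIV \<and> length xs = k}" by (rule image_eqI)
  qed
  moreover have "finite {xs :: 'a list. set xs \<subseteq> UNIV \<and> length xs = k}"
    by (rule finite_lists_length_eq) simp
  ultimately show ?thesis using finite_surj by blast
qed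


lemma reps_exist: "\<exists>xs. proj_reps TYPE('a::{field,finite}) k xs"
proof -
  define cls :: "'a vec \<Rightarrow> 'a vec set" where "cls v = {u. \<exists>c. c \<noteq> 0 \<and> u = c \<cdot>\<^sub>v v}" for v
  define rep where "rep v = (SOME u. u \<in> cls v)" for v
  have self: "v \<in> cls v" for v unfolding cls_def by (intro CollectI exI[of _ 1]) simp
  have rep: "rep v \<in> cls v" for v unfolding rep_def using self by (rule someI)
  have clsI: "cls u = cls v" if "u \<in> cls v" for u v
  proof -
    from that obtain c where c: "c \<noteq> 0" "u = c \<cdot>\<^sub>v v" unfolding cls_def by auto
    have v: "v = inverse c \<cdot>\<^sub>v u" using c by (simp add: smult_smult_assoc)
    show ?thesis
    proof
      show "cls u \<subseteq> cls v"
      proof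
        fix w assume "w \<in> cls u"
        then obtain d where "d \<noteq> 0" "w = d \<cdot>\<^sub>v u" unfolding cls_def by auto
        then show "w \<in> cls v" unfolding cls_def using c by (auto simp: smult_smult_assoc intro!: exI[of _ "d * c"])
      qed
      show "cls v \<subseteq> cls u"
      proof
        fix w assume "w \<in> cls v"
        then obtain d where "d \<noteq> 0" "w = d \<cdot>\<^sub>v v" unfolding cls_def by auto
        then have "w = (d * inverse c) \<cdot>\<^sub>v u" using v by (simp add: smult_smult_assoc)
        then show "w \<in> cls u" unfolding cls_def using c \<open>d \<noteq> 0\<close> by (auto intro!: exI[of _ "d * inverse c"])
      qed
    qed
  qed
  have reprep: "rep (rep v) = rep v" for v
  proof -
    have "rep (rep v) = (SOME u. u \<in> cls (rep v))" by (rule rep_def)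
    also have "\<dots> = (SOME u. u \<in> cls v)" using clsI[OF rep[of v]] by simp
    also have "\<dots> = rep v" by (rule rep_def[symmetric])
    finally show ?thesis .
  qed
  define NZ where "NZ = carrier_vec k - {0\<^sub>v k :: 'a vec}"
  have "finite (rep ` NZ)" unfolding NZ_def using finite_carrier_vec by auto
  then obtain xs where xs: "distinct xs" "set xs = rep ` NZ" using finite_distinct_list by metis
  have P1: "\<forall>x \<in> set xs. x \<in> carrier_vec k \<and> x \<noteq> 0\<^sub>v k"
  proof
    fix x assume "x \<in> set xs"
    then obtain v where v: "v \<in> NZ" "x = rep v" using xs by auto
    then obtain c where c: "c \<noteq> 0" "x = c \<cdot>\<^sub>v v" using rep[of v] unfolding cls_def by auto
    have vv: "v = inverse c \<cdot>\<^sub>v x" using c by (simp add: smult_smult_assoc)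
    show "x \<in> carrier_vec k \<and> x \<noteq> 0\<^sub>v k"
    proof
      show "x \<in> carrier_vec k" using c v unfolding NZ_def by auto
      show "x \<noteq> 0\<^sub>v k"
      proof
        assume "x = 0\<^sub>v k"
        then have "v = 0\<^sub>v k" using vv by auto
        then show False using v unfolding NZ_def by auto
      qed
    qed
  qed
  have P2: "\<forall>i < length xs. \<forall>j < length xs. i \<noteq> j \<longrightarrow> (\<nexists>c. c \<noteq> 0 \<and> xs ! j = c \<cdot>\<^sub>v (xs ! i))"
  proof (intro allI impI notI)
    fix i j assume ij: "i < length xs" "j < length xs" "i \<noteq> j"
      and "\<exists>c. c \<noteq> 0 \<and> xs ! j = c \<cdot>\<^sub>v (xs ! i)"
    then have "xs ! j \<in> cls (xs ! i)" unfolding cls_def by auto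
    then have "cls (xs ! j) = cls (xs ! i)" by (rule clsI)
    then have "rep (xs ! j) = rep (xs ! i)" unfolding rep_def by simp
    moreover have "rep (xs ! j) = xs ! j" "rep (xs ! i) = xs ! i"
      using ij xs nth_mem reprep by (metis imageE)+
    ultimately have "xs ! j = xs ! i" by simp
    then show False using ij xs(1) nth_eq_iff_index_eq by metis
  qed
  have P3: "\<forall>v \<in> carrier_vec k. v \<noteq> 0\<^sub>v k \<longrightarrow> (\<exists>x \<in> set xs. \<exists>c. c \<noteq> 0 \<and> v = c \<cdot>\<^sub>v x)"
  proof (intro ballI impI)
    fix v :: "'a vec" assume "v \<in> carrier_vec k" "v \<noteq> 0\<^sub>v k"
    then have rs: "rep v \<in> set xs" using xs unfolding NZ_def by auto
    obtain c where c: "c \<noteq> 0" "rep v = c \<cdot>\<^sub>v v" using rep[of v] unfolding cls_def by auto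
    then have vv: "v = inverse c \<cdot>\<^sub>v rep v" by (simp add: smult_smult_assoc)
    have "inverse c \<noteq> 0" using c by simp
    then show "\<exists>x \<in> set xs. \<exists>c. c \<noteq> 0 \<and> v = c \<cdot>\<^sub>v x" using rs vv by blast
  qed
  show ?thesis unfolding proj_reps_def using P1 P2 P3 by blast
qed

lemma backward:
  fixes H :: looped_graph
  assumes gk: "in_gk TYPE('a::field) k H" and bl: "is_blowup n E (add_K1 H)"
  shows "\<exists>A\<in>S_set TYPE('a) n E. mat_rank A \<le> k"
proof -
  from gk obtain xs and B :: "'a mat" where pr: "proj_reps TYPE('a) k xs" and B: "B \<in> carrier_mat k k" and Bs: "transpose_mat B = B"
     and iso: "looped_iso (Gamma (transpose_mat (mat_of_cols k xs) * B * mat_of_cols k xs)) H"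
    unfolding in_gk_def by blast
  define U where "U = mat_of_cols k xs"
  define M where "M = transpose_mat U * B * U"
  define m where "m = length xs"
  have U: "U \<in> carrier_mat k m" unfolding U_def m_def by simp
  have xsc: "\<And>i. i < m \<Longrightarrow> xs ! i \<in> carrier_vec k" using pr unfolding proj_reps_def m_def by auto
  have colU: "\<And>i. i<m \<Longrightarrow> col U i = xs ! i" using xsc unfolding U_def m_def by simp
  have dimM: "dim_row M = m" using U B unfolding M_def by simp
  from iso obtain g where g0: "bij_betw g {..<fst (Gamma M)} {..<fst H}"
      and gE0: "\<forall>i<fst (Gamma M). \<forall>j<fst (Gamma M). snd (Gamma M) i j \<longleftrightarrow> snd H (g i) (g j)"
    unfolding looped_iso_def M_def U_def by blast
  have fG: "fst (Gamma M) = m" using dimM by (simp add: Gamma_def)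
  have g: "bij_betw g {..<m} {..<fst H}" using g0 fG by simp
  have gM: "\<And>i j. i<m \<Longrightarrow> j<m \<Longrightarrow> (M $$ (i,j) \<noteq> 0 \<longleftrightarrow> snd H (g i) (g j))"
    using gE0 fG dimM by (simp add: Gamma_def)
  from bl obtain f where f1: "\<forall>x<n. f x < Suc (fst H)"
     and f2: "\<forall>x<n. \<forall>y<n. x \<noteq> y \<longrightarrow> (E x y \<longleftrightarrow> (f x < fst H \<and> f y < fst H \<and> snd H (f x) (f y)))"
    unfolding is_blowup_def add_K1_def by auto
  define h where "h = the_inv_into {..<m} g"
  have h: "h a < m \<and> g (h a) = a" if "a < fst H" for a
  proof
    show "h a < m" using bij_betw_apply[OF bij_betw_the_inv_into[OF g]] that unfolding h_def by auto
    show "g (h a) = a" using f_the_inv_into_f_bij_betw[OF g] that unfolding h_def by auto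
  qed
  define w where "w x = (if f x < fst H then xs ! h (f x) else 0\<^sub>v k)" for x
  define W where "W = mat k n (\<lambda>(t,x). w x $ t)"
  define A where "A = transpose_mat W * B * W"
  have wc: "w x \<in> carrier_vec k" for x using xsc h unfolding w_def by auto
  have W: "W \<in> carrier_mat k n" by (simp add: W_def)
  have colW: "col W x = w x" if "x < n" for x
    using that wc[of x] by (intro eq_vecI) (auto simp: W_def)
  have Aent: "A $$ (x,y) = (if f x < fst H \<and> f y < fst H then M $$ (h (f x), h (f y)) else 0)"
    if "x < n" "y < n" for x y
  proof -
    have "A $$ (x,y) = bil B k (w x) (w y)" unfolding A_def using quad_entry[OF W B that] colW that by simp
    also have "\<dots> = (if f x < fst H \<and> f y < fst H then M $$ (h (f x), h (f y)) else 0)"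
    proof (cases "f x < fst H \<and> f y < fst H")
      case True
      then have "M $$ (h (f x), h (f y)) = bil B k (col U (h (f x))) (col U (h (f y)))"
        unfolding M_def using quad_entry[OF U B] h by simp
      then show ?thesis using True h colU unfolding w_def by simp
    next
      case False
      then show ?thesis unfolding w_def by (auto simp: bil_zero_l bil_zero_r)
    qed
    finally show ?thesis .
  qed
  have Acar: "A \<in> carrier_mat n n" unfolding A_def using W B by simp
  have Asym: "transpose_mat A = A" unfolding A_def by (rule quad_sym[OF W B Bs])
  have AS: "A \<in> S_set TYPE('a) n E"
    unfolding S_set_def
  proof (intro CollectI conjI Acar Asym allI impI)
    fix x y assume xy: "x < n" "y < n" "x \<noteq> y"
    show "(A $$ (x, y) \<noteq> 0) = E x y"
    proof (cases "f x < fst H \<and> f y < fst H")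
      case True
      then show ?thesis using Aent[OF xy(1,2)] gM[of "h (f x)" "h (f y)"] h f2 xy by auto
    next
      case False
      then show ?thesis using Aent[OF xy(1,2)] f2 xy by auto
    qed
  qed
  have "mat_rank A = vec_space.rank n ((transpose_mat W * B) * W)"
    unfolding mat_rank_def A_def using W by simp
  also have "\<dots> \<le> k" by (rule rank_prod_le[of _ n k _ n]) (use W B in auto)
  finally show ?thesis using AS by blast
qed

lemma (in vec_space) sym_factor:
  fixes A :: "'a mat"
  assumes A: "A \<in> carrier_mat n n" and sym: "transpose_mat A = A" and rk: "rank A \<le> k"
  shows "\<exists>W B. W \<in> carrier_mat k n \<and> B \<in> carrier_mat k k \<and> transpose_mat B = B \<and> invertible_mat B
     \<and> A = transpose_mat W * B * W"
proof -
  have Asym: "A $$ (i,j) = A $$ (j,i)" if "i<n" "j<n" for i j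
    using that A by (metis carrier_matD index_transpose_mat(1) sym)
  obtain S where max: "maximal S (\<lambda>T. T \<subseteq> set (cols A) \<and> lin_indpt T)"
    using maximal_exists[of "(\<lambda>T. T \<subseteq> set (cols A) \<and> lin_indpt T)" "card (set (cols A))" "{}"]
    by (meson List.finite_set card_mono empty_iff empty_subsetI finite_lin_indpt2 rev_finite_subset)
  have Ssub: "S \<subseteq> set (cols A)" and Sind: "lin_indpt S" using max unfolding maximal_def by auto
  have rS: "rank A = card S" using rank_card_indpt[OF A max] .
  have finS: "finite S" using Ssub finite_subset by blast
  have Scar: "S \<subseteq> carrier_vec n" using Ssub cols_dim A by (metis carrier_matD(1) subset_trans)
  obtain ss where ss: "distinct ss" "set ss = S" using finite_distinct_list[OF finS] by metis
  define r where "r = length ss"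
  have r: "r = rank A" using rS ss distinct_card unfolding r_def by metis
  define P where "P = mat_of_cols n ss"
  have P: "P \<in> carrier_mat n r" unfolding P_def r_def by simp
  have colsP: "cols P = ss" unfolding P_def using Scar ss by simp
  have inspan: "col A c \<in> span S" if c: "c < n" for c
  proof -
    have cA: "col A c \<in> set (cols A)" using c A by (metis carrier_matD(2) cols_length cols_nth nth_mem)
    have cc: "col A c \<in> carrier_vec n" using c A by simp
    show "col A c \<in> span S"
    proof (cases "col A c \<in> S")
      case True then show ?thesis using span_mem[OF Scar] by simp
    next
      case False
      have "lin_dep (S \<union> {col A c})"
      proof (rule ccontr)
        assume "\<not> lin_dep (S \<union> {col A c})"
        then have "S \<union> {col A c} = S" using max cA Ssub unfolding maximal_def by blast
        then show False using False by auto
      qed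
      then show ?thesis using lin_dep_iff_in_span[OF Scar Sind cc False] by simp
    qed
  qed
  have exq: "\<forall>c. c < n \<longrightarrow> (\<exists>q. q \<in> carrier_vec r \<and> col A c = P *\<^sub>v q)"
  proof (intro allI impI)
    fix c assume c: "c<n"
    obtain a where a: "lincomb a S = col A c" using finite_in_span[OF finS Scar inspan[OF c]] by blast
    have "P *\<^sub>v vec r (\<lambda>i. a (col P i)) = lincomb a (set (cols P))"
      using mat_mult_eq_lincomb[OF P] colsP ss by simp
    then show "\<exists>q. q \<in> carrier_vec r \<and> col A c = P *\<^sub>v q" using a colsP ss
      by (intro exI[of _ "vec r (\<lambda>i. a (col P i))"]) auto
  qed
  then obtain q where q: "\<And>c. c<n \<Longrightarrow> q c \<in> carrier_vec r \<and> col A c = P *\<^sub>v q c"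
    by (metis (mono_tags))
  have exj: "\<forall>t. t < r \<longrightarrow> (\<exists>j. j<n \<and> ss!t = col A j)"
  proof (intro allI impI)
    fix t assume "t < r"
    then have "ss ! t \<in> set (cols A)" using Ssub ss unfolding r_def by auto
    then obtain j where "j < length (cols A)" "ss ! t = cols A ! j" by (metis in_set_conv_nth)
    then show "\<exists>j. j<n \<and> ss!t = col A j" using A by auto
  qed
  then obtain jj where jj: "\<And>t. t<r \<Longrightarrow> jj t < n \<and> ss!t = col A (jj t)" by (metis (mono_tags))
  have Pent: "P $$ (i,t) = A $$ (i, jj t)" if "i<n" "t<r" for i t
    using that jj[of t] A unfolding P_def mat_of_cols_def r_def by simp
  define Q where "Q = mat r n (\<lambda>(t,c). q c $ t)"
  have E1: "A $$ (i,c) = (\<Sum>t<r. A $$ (i, jj t) * Q $$ (t,c))" if "i<n" "c<n" for i c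
  proof -
    have "A $$ (i,c) = col A c $ i" using that A by simp
    also have "\<dots> = (P *\<^sub>v q c) $ i" using q[OF that(2)] by simp
    also have "\<dots> = (\<Sum>t<r. P $$ (i,t) * q c $ t)"
    proof -
      have qc: "q c \<in> carrier_vec r" using q that by blast
      then have d: "dim_vec (q c) = r" by simp
      have "(P *\<^sub>v q c) $ i = row P i \<bullet> q c" using P that by simp
      also have "\<dots> = (\<Sum>t<r. P $$ (i,t) * q c $ t)"
        unfolding scalar_prod_def lessThan_atLeast0 d by (rule sum.cong) (use P that in auto)
      finally show ?thesis .
    qed
    also have "\<dots> = (\<Sum>t<r. A $$ (i, jj t) * Q $$ (t,c))"
      using that by (intro sum.cong refl) (simp add: Pent Q_def)
    finally show ?thesis .
  qed
  define D where "D = mat r r (\<lambda>(s,t). A $$ (jj s, jj t))"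
  have Dsym: "D $$ (s,t) = D $$ (t,s)" if "s<r" "t<r" for s t
    using that Asym jj by (simp add: D_def)
  have E2: "A $$ (i, jj t) = (\<Sum>s<r. Q $$ (s,i) * D $$ (s,t))" if "i<n" "t<r" for i t
  proof -
    have "A $$ (i, jj t) = A $$ (jj t, i)" using that jj Asym by simp
    also have "\<dots> = (\<Sum>s<r. A $$ (jj t, jj s) * Q $$ (s,i))" using E1[of "jj t" i] that jj by simp
    also have "\<dots> = (\<Sum>s<r. Q $$ (s,i) * D $$ (s,t))"
      using that by (intro sum.cong refl) (simp add: D_def Asym jj)
    finally show ?thesis .
  qed
  have E3: "A $$ (i,c) = (\<Sum>s<r. \<Sum>t<r. Q$$(s,i) * D$$(s,t) * Q$$(t,c))" if "i<n" "c<n" for i c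
  proof -
    have "A $$ (i,c) = (\<Sum>t<r. (\<Sum>s<r. Q $$ (s,i) * D $$ (s,t)) * Q $$ (t,c))"
      using E1[OF that] E2 that by simp
    also have "\<dots> = (\<Sum>t<r. \<Sum>s<r. Q$$(s,i) * D$$(s,t) * Q$$(t,c))" by (simp add: sum_distrib_right)
    also have "\<dots> = (\<Sum>s<r. \<Sum>t<r. Q$$(s,i) * D$$(s,t) * Q$$(t,c))" by (rule sum.swap)
    finally show ?thesis .
  qed
  have distP: "distinct (cols P)" using colsP ss by simp
  have indP: "lin_indpt (set (cols P))" using colsP ss Sind by simp
  have Dker: "v = 0\<^sub>v r" if v: "v \<in> carrier_vec r" and Dv: "D *\<^sub>v v = 0\<^sub>v r" for v
  proof -
    have Dv0: "(\<Sum>t<r. D$$(s,t) * v$t) = 0" if "s < r" for s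
    proof -
      have "(\<Sum>t<r. D$$(s,t) * v$t) = (D *\<^sub>v v) $ s"
        using that v by (simp add: D_def scalar_prod_def lessThan_atLeast0)
      then show ?thesis using Dv that by simp
    qed
    have "P *\<^sub>v v = 0\<^sub>v n"
    proof (rule eq_vecI)
      fix i assume "i < dim_vec (0\<^sub>v n :: 'a vec)"
      then have i: "i < n" by simp
      have "(P *\<^sub>v v) $ i = (\<Sum>t<r. P$$(i,t) * v$t)"
        using P i v by (simp add: scalar_prod_def lessThan_atLeast0)
      also have "\<dots> = (\<Sum>t<r. (\<Sum>s<r. Q$$(s,i) * D$$(s,t)) * v$t)"
        using i by (intro sum.cong refl) (simp add: Pent E2)
      also have "\<dots> = (\<Sum>t<r. \<Sum>s<r. Q$$(s,i) * (D$$(s,t) * v$t))"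
        by (simp add: sum_distrib_right mult.assoc)
      also have "\<dots> = (\<Sum>s<r. \<Sum>t<r. Q$$(s,i) * (D$$(s,t) * v$t))" by (rule sum.swap)
      also have "\<dots> = (\<Sum>s<r. Q$$(s,i) * (\<Sum>t<r. D$$(s,t) * v$t))"
        by (simp add: sum_distrib_left)
      also have "\<dots> = 0" using Dv0 by simp
      finally show "(P *\<^sub>v v) $ i = 0\<^sub>v n $ i" using i by simp
    qed (use P in simp)
    then show ?thesis using lin_depI[OF P v _ _ distP] indP by blast
  qed
  have Dinv: "invertible_mat D" by (rule inv_from_kernel[OF _ Dker]) (simp_all add: D_def)
  have rk': "r \<le> k" using r rk by simp
  define W where "W = mat k n (\<lambda>(t,c). if t<r then Q $$ (t,c) else 0)"
  define B where "B = mat k k (\<lambda>(s,t). if s<r \<and> t<r then D$$(s,t) else if s=t then 1 else 0)"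
  have W: "W \<in> carrier_mat k n" by (simp add: W_def)
  have B: "B \<in> carrier_mat k k" by (simp add: B_def)
  have Bsym: "transpose_mat B = B"
    by (rule eq_matI) (auto simp: B_def Dsym)
  have Bker: "v = 0\<^sub>v k" if v: "v \<in> carrier_vec k" and Bv: "B *\<^sub>v v = 0\<^sub>v k" for v
  proof -
    have Bv_ent: "(B *\<^sub>v v) $ s = (\<Sum>t<k. B$$(s,t) * v$t)" if "s<k" for s
      using that v B by (simp add: scalar_prod_def lessThan_atLeast0)
    have hi: "v $ s = 0" if "r \<le> s" "s < k" for s
    proof -
      have "(\<Sum>t<k. B$$(s,t) * v$t) = (\<Sum>t<k. (if t = s then v $ t else 0))"
        using that by (intro sum.cong refl) (auto simp: B_def)
      also have "\<dots> = v $ s" using that by simp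
      finally show ?thesis using Bv_ent[of s] Bv that by simp
    qed
    define v' where "v' = vec r (\<lambda>t. v $ t)"
    have "D *\<^sub>v v' = 0\<^sub>v r"
    proof (rule eq_vecI)
      fix s assume "s < dim_vec (0\<^sub>v r :: 'a vec)"
      then have s: "s < r" by simp
      have "(D *\<^sub>v v') $ s = (\<Sum>t<r. D$$(s,t) * v$t)"
        using s by (simp add: D_def v'_def scalar_prod_def lessThan_atLeast0)
      also have "\<dots> = (\<Sum>t<k. B$$(s,t) * v$t)"
      proof -
        have "(\<Sum>t<k. B$$(s,t) * v$t) = (\<Sum>t<r. B$$(s,t) * v$t)"
          by (rule sum_trunc[OF rk']) (use s rk' in \<open>auto simp: B_def\<close>)
        also have "\<dots> = (\<Sum>t<r. D$$(s,t) * v$t)"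
          using s rk' by (intro sum.cong refl) (auto simp: B_def)
        finally show ?thesis by simp
      qed
      also have "\<dots> = 0" using Bv_ent[of s] Bv s rk' by simp
      finally show "(D *\<^sub>v v') $ s = 0\<^sub>v r $ s" using s by simp
    qed (simp add: D_def)
    then have "v' = 0\<^sub>v r" using Dker by (simp add: v'_def)
    then have lo: "v $ t = 0" if "t < r" for t using that
      by (metis index_vec index_zero_vec(1) v'_def)
    show ?thesis
    proof (rule eq_vecI)
      fix s assume "s < dim_vec (0\<^sub>v k :: 'a vec)"
      then show "v $ s = 0\<^sub>v k $ s" using lo hi by (cases "s < r") auto
    qed (use v in simp)
  qed
  have Binv: "invertible_mat B" by (rule inv_from_kernel[OF B Bker])
  have AWBW: "A = transpose_mat W * B * W"
  proof (rule eq_matI)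
    fix i c assume "i < dim_row (transpose_mat W * B * W)" "c < dim_col (transpose_mat W * B * W)"
    then have ic: "i < n" "c < n" using W B by auto
    have "(transpose_mat W * B * W) $$ (i,c) = bil B k (col W i) (col W c)"
      by (rule quad_entry[OF W B ic])
    also have "\<dots> = (\<Sum>s<k. \<Sum>t<k. (if s<r then Q$$(s,i) else 0) * B$$(s,t) * (if t<r then Q$$(t,c) else 0))"
      unfolding bil_def using ic by (intro sum.cong refl) (simp add: W_def)
    also have "\<dots> = (\<Sum>s<r. \<Sum>t<k. (if s<r then Q$$(s,i) else 0) * B$$(s,t) * (if t<r then Q$$(t,c) else 0))"
      by (rule sum_trunc[OF rk']) simp
    also have "\<dots> = (\<Sum>s<r. \<Sum>t<r. (if s<r then Q$$(s,i) else 0) * B$$(s,t) * (if t<r then Q$$(t,c) else 0))"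
      by (intro sum.cong refl sum_trunc[OF rk']) simp
    also have "\<dots> = (\<Sum>s<r. \<Sum>t<r. Q$$(s,i) * D$$(s,t) * Q$$(t,c))"
      using rk' by (intro sum.cong refl) (simp add: B_def)
    also have "\<dots> = A $$ (i,c)" using E3[OF ic] by simp
    finally show "A $$ (i,c) = (transpose_mat W * B * W) $$ (i,c)" by simp
  qed (use A W B in auto)
  show ?thesis using W B Bsym Binv AWBW by blast
qed


lemma forward:
  assumes AS: "A \<in> S_set TYPE('a::{field,finite}) n E" and rk: "mat_rank A \<le> k"
  shows "\<exists>H. in_gk TYPE('a) k H \<and> is_blowup n E (add_K1 H)"
proof -
  have Acar: "A \<in> carrier_mat n n" and Asym: "transpose_mat A = A"
    and Aoff: "\<And>i j. i<n \<Longrightarrow> j<n \<Longrightarrow> i \<noteq> j \<Longrightarrow> (A $$ (i, j) \<noteq> 0 \<longleftrightarrow> E i j)"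
    using AS unfolding S_set_def by auto
  have "vec_space.rank n A \<le> k" using rk Acar unfolding mat_rank_def by simp
  from vec_space.sym_factor[OF Acar Asym this] obtain W B where
    W: "W \<in> carrier_mat k n" and B: "B \<in> carrier_mat k k" and Bs: "transpose_mat B = B"
    and Binv: "invertible_mat B" and AWBW: "A = transpose_mat W * B * W" by blast
  obtain xs where pr: "proj_reps TYPE('a) k xs" using reps_exist by blast
  define U where "U = mat_of_cols k xs"
  define M where "M = transpose_mat U * B * U"
  define m where "m = length xs"
  define H where "H = Gamma M"
  have U: "U \<in> carrier_mat k m" unfolding U_def m_def by simp
  have xsc: "\<And>i. i < m \<Longrightarrow> xs ! i \<in> carrier_vec k" using pr unfolding proj_reps_def m_def by auto
  have colU: "\<And>i. i<m \<Longrightarrow> col U i = xs ! i" using xsc unfolding U_def m_def by simp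
  have dimM: "dim_row M = m" using U B unfolding M_def by simp
  have fH: "fst H = m" unfolding H_def Gamma_def using dimM by simp
  have sH: "snd H i j \<longleftrightarrow> (M $$ (i,j) \<noteq> 0)" if "i<m" "j<m" for i j
    unfolding H_def Gamma_def using dimM that by simp
  have gk: "in_gk TYPE('a) k H"
    unfolding in_gk_def
    apply (rule exI[of _ xs], rule exI[of _ B])
    using pr B Bs Binv unfolding looped_iso_def H_def M_def U_def
    by (auto intro!: exI[of _ id])
  have P3: "\<forall>v \<in> carrier_vec k. v \<noteq> 0\<^sub>v k \<longrightarrow> (\<exists>x \<in> set xs. \<exists>c. c \<noteq> 0 \<and> v = c \<cdot>\<^sub>v x)"
    using pr unfolding proj_reps_def by blast
  define f where "f x = (if col W x = 0\<^sub>v k then m else (SOME i. i<m \<and> (\<exists>c. c \<noteq> 0 \<and> col W x = c \<cdot>\<^sub>v xs!i)))" for x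
  have colWc: "col W x \<in> carrier_vec k" for x unfolding carrier_vec_def using W by simp
  have fx: "f x < m \<and> (\<exists>c. c \<noteq> 0 \<and> col W x = c \<cdot>\<^sub>v xs ! f x)" if nz: "col W x \<noteq> 0\<^sub>v k" for x
  proof -
    obtain y c where y: "y \<in> set xs" "c \<noteq> 0" "col W x = c \<cdot>\<^sub>v y" using P3 colWc[of x] nz by blast
    then obtain i where "i < m" "y = xs ! i" unfolding m_def by (metis in_set_conv_nth)
    then have ex: "\<exists>i. i<m \<and> (\<exists>c. c \<noteq> 0 \<and> col W x = c \<cdot>\<^sub>v xs!i)" using y by blast
    show ?thesis unfolding f_def using nz someI_ex[OF ex] by simp
  qed
  have fm: "f x = m" if "col W x = 0\<^sub>v k" for x unfolding f_def using that by simp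
  have Aent: "A $$ (x,y) = bil B k (col W x) (col W y)" if "x<n" "y<n" for x y
    unfolding AWBW by (rule quad_entry[OF W B that])
  have bl: "is_blowup n E (add_K1 H)"
    unfolding is_blowup_def add_K1_def fst_conv snd_conv fH
  proof (intro exI[of _ f] conjI allI impI)
    fix x assume "x < n"
    show "f x < Suc m" using fx[of x] fm[of x] by (cases "col W x = 0\<^sub>v k") auto
  next
    fix x y assume xy: "x < n" "y < n" "x \<noteq> y"
    show "E x y = (f x < m \<and> f y < m \<and> snd H (f x) (f y))"
    proof (cases "col W x = 0\<^sub>v k \<or> col W y = 0\<^sub>v k")
      case True
      then have "A $$ (x,y) = 0" using Aent[OF xy(1,2)] by (auto simp: bil_zero_l bil_zero_r)
      moreover have "\<not> (f x < m \<and> f y < m)" using True fm by auto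
      ultimately show ?thesis using Aoff[OF xy] by auto
    next
      case False
      then obtain cx cy where c: "cx \<noteq> 0" "col W x = cx \<cdot>\<^sub>v xs ! f x" "cy \<noteq> 0" "col W y = cy \<cdot>\<^sub>v xs ! f y"
        and fxy: "f x < m" "f y < m" using fx by blast
      have "A $$ (x,y) = cx * cy * bil B k (xs ! f x) (xs ! f y)"
        using Aent[OF xy(1,2)] c fxy xsc by (simp add: bil_smult_l bil_smult_r)
      also have "bil B k (xs ! f x) (xs ! f y) = M $$ (f x, f y)"
        unfolding M_def using quad_entry[OF U B fxy] colU fxy by simp
      finally have "A $$ (x,y) = cx * cy * M $$ (f x, f y)" .
      then show ?thesis using Aoff[OF xy] c fxy sH by auto
    qed
  qed
  show ?thesis using gk bl by blast
qed

theorem mainTheorem1: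
  fixes n k :: nat and E :: "nat \<Rightarrow> nat \<Rightarrow> bool"
  assumes "k \<ge> 1" and "simple_graph n E"
  shows "mr TYPE('a::{field,finite}) n E \<le> k \<longleftrightarrow>
         (\<exists>H. in_gk TYPE('a) k H \<and> is_blowup n E (add_K1 H))"
proof
  assume mr: "mr TYPE('a::{field,finite}) n E \<le> k"
  define A0 :: "'a mat" where "A0 = mat n n (\<lambda>(i,j). if E i j then 1 else 0)"
  have "A0 \<in> S_set TYPE('a) n E"
    using assms(2) unfolding S_set_def A0_def simple_graph_def by auto
  then have ex: "\<exists>r. \<exists>A \<in> S_set TYPE('a) n E. mat_rank A = r" by blast
  obtain A where A: "A \<in> S_set TYPE('a) n E" "mat_rank A = mr TYPE('a) n E"
    using LeastI_ex[OF ex] unfolding mr_def by blast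
  show "\<exists>H. in_gk TYPE('a) k H \<and> is_blowup n E (add_K1 H)"
    by (rule forward[OF A(1)]) (use A(2) mr in simp)
next
  assume "\<exists>H. in_gk TYPE('a) k H \<and> is_blowup n E (add_K1 H)"
  then obtain H where "in_gk TYPE('a) k H" "is_blowup n E (add_K1 H)" by blast
  from backward[OF this] obtain A where A: "A \<in> S_set TYPE('a) n E" "mat_rank A \<le> k" by blast
  have "mr TYPE('a) n E \<le> mat_rank A" unfolding mr_def by (rule Least_le) (use A in blast)
  then show "mr TYPE('a::{field,finite}) n E \<le> k" using A by simp
qed


end
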